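(* Any quantum oracle algorithm that solves $\mathsf{DL\text{-}LCS\text{-}RLE}$ with probability at least $2/3$ requires $\Omega(n)$ queries, where $n$ is the encoded length of the inputs.
   Context: A string $\tilde s$ has run-length encoding (RLE) $s=s[1]\cdots s[m]$, its sequence of maximal runs of identical characters, each run having character $C(s[i])$ and length $R(s[i])$; $|s|=m$ is the encoded length. The problem $\mathsf{DL\text{-}LCS\text{-}RLE}$: given quantum oracle access to two RLE strings $A$ and $B$ only through the unitaries $|i\rangle|c\rangle|r\rangle\mapsto|i\rangle|c\oplus C(S[i])\rangle|r\oplus R(S[i])\rangle$ for $S\in\{A,B\}$ (no prefix-sum oracle), compute $|\tilde s|$ where $\tilde s$ is a longest common substring of the decoded strings $\tilde A$ and $\tilde B$. *)

theory Defs
  imports Complex_Main "HOL-Library.Sublist"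
begin

text \<open>An RLE string is a list of runs (character, run length); characters are naturals.\<close>
type_synonym rle = "(nat \<times> nat) list"

definition valid_rle :: "rle \<Rightarrow> bool" where
  "valid_rle S \<longleftrightarrow> (\<forall>k<length S. 1 \<le> snd (S ! k))
     \<and> (\<forall>k. Suc k < length S \<longrightarrow> fst (S ! k) \<noteq> fst (S ! Suc k))"

definition decode :: "rle \<Rightarrow> nat list" where
  "decode S = concat (map (\<lambda>(c, r). replicate r c) S)"

definition lcs_len :: "nat list \<Rightarrow> nat list \<Rightarrow> nat" where
  "lcs_len X Y = Max {length z | z. sublist z X \<and> sublist z Y}"

text \<open>Computational basis states: (index i, character register c, run-length register r,
  workspace w).  Registers c and r hold kc resp. kr bits.\<close>
type_synonym qbasis = "nat \<times> nat \<times> nat \<times> nat"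
type_synonym qstate = "qbasis \<Rightarrow> complex"
type_synonym qmat = "qbasis \<Rightarrow> qbasis \<Rightarrow> complex"

definition qbasis_set :: "nat \<Rightarrow> nat \<Rightarrow> nat \<Rightarrow> nat \<Rightarrow> qbasis set" where
  "qbasis_set n kc kr W = {0..<n} \<times> {0..<2^kc} \<times> {0..<2^kr} \<times> {0..<W}"

definition unitary_on :: "qbasis set \<Rightarrow> qmat \<Rightarrow> bool" where
  "unitary_on Bs U \<longleftrightarrow> (\<forall>x\<in>Bs. \<forall>y\<in>Bs.
      (\<Sum>z\<in>Bs. cnj (U z x) * U z y) = (if x = y then 1 else 0))"

definition apply_mat :: "qbasis set \<Rightarrow> qmat \<Rightarrow> qstate \<Rightarrow> qstate" where
  "apply_mat Bs U \<psi> = (\<lambda>x. \<Sum>y\<in>Bs. U x y * \<psi> y)"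

definition query_op :: "rle \<Rightarrow> qstate \<Rightarrow> qstate" where
  "query_op S \<psi> = (\<lambda>(i, c, r, w). \<psi> (i, Bit_Operations.xor c (fst (S ! i)), Bit_Operations.xor r (snd (S ! i)), w))"

fun qrun :: "qbasis set \<Rightarrow> (nat \<Rightarrow> qmat) \<Rightarrow> (nat \<Rightarrow> bool) \<Rightarrow> rle \<Rightarrow> rle \<Rightarrow> nat \<Rightarrow> qstate" where
  "qrun Bs U sched A B 0 = apply_mat Bs (U 0) (\<lambda>x. if x = (0, 0, 0, 0) then 1 else 0)"
| "qrun Bs U sched A B (Suc t) =
     apply_mat Bs (U (Suc t)) (query_op (if sched t then A else B) (qrun Bs U sched A B t))"

definition succ_prob :: "qbasis set \<Rightarrow> (nat \<Rightarrow> qmat) \<Rightarrow> (nat \<Rightarrow> bool) \<Rightarrow> (qbasis \<Rightarrow> nat)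
    \<Rightarrow> nat \<Rightarrow> rle \<Rightarrow> rle \<Rightarrow> nat \<Rightarrow> real" where
  "succ_prob Bs U sched out T A B ans =
     (\<Sum>x\<in>{x\<in>Bs. out x = ans}. (cmod (qrun Bs U sched A B T x))\<^sup>2)"

end

theory Submission
  imports Defs
begin



lemma xor_lt: "(a::nat) < 2^k \<Longrightarrow> b < 2^k \<Longrightarrow> Bit_Operations.xor a b < 2^k"
  by (metis take_bit_nat_eq_self_iff take_bit_nat_less_exp take_bit_xor)

lemma xor_xor_cancel: "Bit_Operations.xor (Bit_Operations.xor (a::nat) b) b = a"
  by (simp add: xor.assoc)

definition depJ :: "nat set \<Rightarrow> (nat set \<Rightarrow> complex) \<Rightarrow> bool" where
  "depJ J g \<longleftrightarrow> (\<forall>S S'. S \<inter> J = S' \<inter> J \<longrightarrow> g S = g S')"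

inductive ld :: "nat \<Rightarrow> (nat set \<Rightarrow> complex) \<Rightarrow> bool" for d where
  ld_dep: "finite J \<Longrightarrow> card J \<le> d \<Longrightarrow> depJ J g \<Longrightarrow> ld d g"
| ld_add: "ld d f \<Longrightarrow> ld d g \<Longrightarrow> ld d (\<lambda>S. f S + g S)"

lemma ld_const: "ld d (\<lambda>S. c)"
  by (rule ld_dep[of "{}"]) (auto simp: depJ_def)

lemma ld_mono: "ld d f \<Longrightarrow> d \<le> e \<Longrightarrow> ld e f"
proof (induction rule: ld.induct)
  case (ld_dep J g) then show ?case by (intro ld.ld_dep[of J]) auto
next
  case (ld_add f g) then show ?case by (intro ld.ld_add) auto
qed

lemma ld_sum: "finite Y \<Longrightarrow> (\<And>y. y \<in> Y \<Longrightarrow> ld d (F y)) \<Longrightarrow> ld d (\<lambda>S. \<Sum>y\<in>Y. F y S)"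
proof (induction Y rule: finite_induct)
  case empty then show ?case using ld_const[of d 0] by simp
next
  case (insert y Y)
  then show ?case using ld_add[of d "F y" "\<lambda>S. \<Sum>y\<in>Y. F y S"] by simp
qed

lemma ld_cnj: "ld d f \<Longrightarrow> ld d (\<lambda>S. cnj (f S))"
proof (induction rule: ld.induct)
  case (ld_dep J g)
  have "depJ J (\<lambda>S. cnj (g S))" using ld_dep(3) unfolding depJ_def by metis
  then show ?case by (rule ld.ld_dep[OF ld_dep(1) ld_dep(2)])
next
  case (ld_add f g)
  have "ld d (\<lambda>S. cnj (f S) + cnj (g S))" by (rule ld.ld_add[OF ld_add.IH])
  then show ?case by simp
qed

lemma ld_mult_dep:
  assumes "finite J" "card J \<le> a" "depJ J f"
  shows "ld b g \<Longrightarrow> ld (a+b) (\<lambda>S. f S * g S)"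
proof (induction rule: ld.induct)
  case (ld_dep J' g)
  show ?case
  proof (rule ld.ld_dep[of "J \<union> J'"])
    show "finite (J \<union> J')" using assms(1) ld_dep(1) by simp
    show "card (J \<union> J') \<le> a + b" using card_Un_le[of J J'] assms(2) ld_dep(2) by linarith
    show "depJ (J \<union> J') (\<lambda>S. f S * g S)" unfolding depJ_def
    proof (intro allI impI)
      fix S S' assume h: "S \<inter> (J \<union> J') = S' \<inter> (J \<union> J')"
      have "S \<inter> J = (S \<inter> (J \<union> J')) \<inter> J" by auto
      also have "\<dots> = (S' \<inter> (J \<union> J')) \<inter> J" using h by simp
      also have "\<dots> = S' \<inter> J" by auto
      finally have 1: "S \<inter> J = S' \<inter> J" .
      have "S \<inter> J' = (S \<inter> (J \<union> J')) \<inter> J'" by auto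
      also have "\<dots> = (S' \<inter> (J \<union> J')) \<inter> J'" using h by simp
      also have "\<dots> = S' \<inter> J'" by auto
      finally have 2: "S \<inter> J' = S' \<inter> J'" .
      have "f S = f S'" using assms(3) 1 unfolding depJ_def by blast
      moreover have "g S = g S'" using ld_dep(3) 2 unfolding depJ_def by blast
      ultimately show "f S * g S = f S' * g S'" by simp
    qed
  qed
next
  case (ld_add g1 g2)
  have "ld (a+b) (\<lambda>S. f S * g1 S + f S * g2 S)"
    by (rule ld.ld_add[OF ld_add.IH(1) ld_add.IH(2)])
  then show ?case by (simp add: distrib_left)
qed

lemma ld_mult: "ld a f \<Longrightarrow> ld b g \<Longrightarrow> ld (a+b) (\<lambda>S. f S * g S)"
proof (induction rule: ld.induct)
  case (ld_dep J f) then show ?case using ld_mult_dep by blast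
next
  case (ld_add f1 f2)
  have "ld (a+b) (\<lambda>S. f1 S * g S + f2 S * g S)"
    by (rule ld.ld_add[OF ld_add.IH(1)[OF ld_add.prems] ld_add.IH(2)[OF ld_add.prems]])
  then show ?case by (simp add: distrib_right)
qed

lemma cancel_one:
  fixes n :: nat
  assumes "i < n" "\<And>S. f (insert i S) = f S"
  shows "(\<Sum>S\<in>Pow {..<n}. (-1)^card S * f S) = (0::complex)"
proof -
  let ?V = "{..<n} - {i}"
  have U: "{..<n} = insert i ?V" using assms by auto
  have P1: "Pow {..<n} = Pow ?V \<union> insert i ` Pow ?V" by (subst U, rule Pow_insert)
  have P2: "Pow ?V \<inter> insert i ` Pow ?V = {}" by auto
  have F1: "finite (Pow ?V)" by simp
  have F2: "finite (insert i ` Pow ?V)" by simp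
  have "(\<Sum>S\<in>Pow {..<n}. (-1)^card S * f S) =
     (\<Sum>S\<in>Pow ?V. (-1)^card S * f S) + (\<Sum>S\<in>insert i ` Pow ?V. (-1)^card S * f S)"
    unfolding P1 by (rule sum.union_disjoint[OF F1 F2 P2])
  also have "(\<Sum>S\<in>insert i ` Pow ?V. (-1)^card S * f S) = (\<Sum>S\<in>Pow ?V. (-1)^card (insert i S) * f (insert i S))"
  proof (rule sum.reindex_cong[where l="insert i"])
    show "inj_on (insert i) (Pow ?V)" unfolding inj_on_def by blast
  qed auto
  also have "\<dots> = (\<Sum>S\<in>Pow ?V. - ((-1)^card S * f S))"
  proof (rule sum.cong[OF refl])
    fix S assume "S \<in> Pow ?V"
    then have Ss: "S \<subseteq> ?V" by simp
    have "finite ?V" by simp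
    then have "finite S" using Ss by (rule rev_finite_subset)
    moreover have "i \<notin> S" using Ss by blast
    ultimately have "card (insert i S) = Suc (card S)" by simp
    then have "(-1)^card (insert i S) = - ((-1)^card S :: complex)" by simp
    then show "(-1)^card (insert i S) * f (insert i S) = - ((-1)^card S * f S)"
      using assms(2)[of S] by simp
  qed
  finally show ?thesis by (simp only: sum_negf) simp
qed

lemma ld_cancel: "ld d f \<Longrightarrow> d < n \<Longrightarrow> (\<Sum>S\<in>Pow {..<n}. (-1)^card S * f S) = (0::complex)"
proof (induction rule: ld.induct)
  case (ld_dep J g)
  have "\<not> {..<n} \<subseteq> J"
  proof
    assume "{..<n} \<subseteq> J"
    then have "card {..<n} \<le> card J" by (rule card_mono[OF ld_dep(1)])
    then show False using ld_dep(2) ld_dep(4) by simp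
  qed
  then obtain i where i: "i < n" "i \<notin> J" by auto
  show ?case
  proof (rule cancel_one[OF i(1)])
    fix S have "insert i S \<inter> J = S \<inter> J" using i(2) by auto
    then show "g (insert i S) = g S" using ld_dep(3) unfolding depJ_def by blast
  qed
next
  case (ld_add f g)
  have "(\<Sum>S\<in>Pow {..<n}. (-1)^card S * (f S + g S)) =
    (\<Sum>S\<in>Pow {..<n}. (-1)^card S * f S) + (\<Sum>S\<in>Pow {..<n}. (-1)^card S * g S)"
    by (simp add: distrib_left sum.distrib)
  also have "\<dots> = 0" using ld_add.IH ld_add.prems by simp
  finally show ?case .
qed



definition mk :: "nat \<Rightarrow> nat set \<Rightarrow> rle" where
  "mk n S = map (\<lambda>i. (i mod 2, if i \<in> S then 2 else 1)) [0..<n]"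

lemma mk_nth: "i < n \<Longrightarrow> mk n S ! i = (i mod 2, if i \<in> S then 2 else 1)"
  by (simp add: mk_def)

lemma ld_ind: "ld 1 (\<lambda>S. if i \<in> S then a else b)"
  by (rule ld_dep[of "{i}"]) (auto simp: depJ_def)

lemma amp_ld: "ld t (\<lambda>S. qrun (qbasis_set n kc kr W) U sched (mk n S) (mk n S) t x)"
proof (induction t arbitrary: x)
  case 0
  show ?case by (simp add: ld_const)
next
  case (Suc t)
  let ?Bs = "qbasis_set n kc kr W"
  let ?psi = "\<lambda>S. qrun ?Bs U sched (mk n S) (mk n S) t"
  have eq: "(\<lambda>S. qrun ?Bs U sched (mk n S) (mk n S) (Suc t) x) =
    (\<lambda>S. \<Sum>y\<in>?Bs. U (Suc t) x y * query_op (mk n S) (?psi S) y)"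
    by (simp add: apply_mat_def)
  show ?case unfolding eq
  proof (rule ld_sum)
    show "finite ?Bs" by (simp add: qbasis_set_def)
    fix y assume "y \<in> ?Bs"
    then obtain i c r w where y: "y = (i, c, r, w)" "i < n" by (cases y) (auto simp: qbasis_set_def)
    let ?p1 = "(i, Bit_Operations.xor c (i mod 2), Bit_Operations.xor r 2, w)"
    let ?p0 = "(i, Bit_Operations.xor c (i mod 2), Bit_Operations.xor r 1, w)"
    have e2: "(\<lambda>S. U (Suc t) x y * query_op (mk n S) (?psi S) y) =
      (\<lambda>S. U (Suc t) x y * ((if i \<in> S then 1 else 0) * ?psi S ?p1 + (if i \<in> S then 0 else 1) * ?psi S ?p0))"
      using y by (auto simp: query_op_def mk_nth)
    have "ld (1 + t) (\<lambda>S. (if i \<in> S then 1 else 0) * ?psi S ?p1)"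
      by (rule ld_mult[OF ld_ind Suc.IH])
    moreover have "ld (1 + t) (\<lambda>S. (if i \<in> S then 0 else 1) * ?psi S ?p0)"
      by (rule ld_mult[OF ld_ind Suc.IH])
    ultimately have "ld (1 + t) (\<lambda>S. (if i \<in> S then 1 else 0) * ?psi S ?p1 + (if i \<in> S then 0 else 1) * ?psi S ?p0)"
      by (rule ld_add)
    from ld_mult[OF ld_const[of 0 "U (Suc t) x y"] this] show "ld (Suc t) (\<lambda>S. U (Suc t) x y * query_op (mk n S) (?psi S) y)"
      unfolding e2 by simp
  qed
qed




definition nrm :: "qbasis set \<Rightarrow> qstate \<Rightarrow> real" where
  "nrm Bs \<psi> = (\<Sum>x\<in>Bs. (cmod (\<psi> x))^2)"

lemma nrm_c: "complex_of_real (nrm Bs \<psi>) = (\<Sum>x\<in>Bs. \<psi> x * cnj (\<psi> x))"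
  unfolding nrm_def of_real_sum by (rule sum.cong[OF refl]) (rule complex_norm_square)

lemma unitary_nrm:
  assumes fin: "finite Bs" and un: "unitary_on Bs U"
  shows "nrm Bs (apply_mat Bs U \<psi>) = nrm Bs \<psi>"
proof -
  have "complex_of_real (nrm Bs (apply_mat Bs U \<psi>)) =
    (\<Sum>x\<in>Bs. (\<Sum>y\<in>Bs. U x y * \<psi> y) * cnj (\<Sum>z\<in>Bs. U x z * \<psi> z))"
    by (simp add: nrm_c apply_mat_def)
  also have "\<dots> = (\<Sum>x\<in>Bs. \<Sum>y\<in>Bs. \<Sum>z\<in>Bs. (U x y * \<psi> y) * cnj (U x z * \<psi> z))"
    by (simp only: cnj_sum sum_product)
  also have "\<dots> = (\<Sum>y\<in>Bs. \<Sum>x\<in>Bs. \<Sum>z\<in>Bs. (U x y * \<psi> y) * cnj (U x z * \<psi> z))"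
    by (rule sum.swap)
  also have "\<dots> = (\<Sum>y\<in>Bs. \<Sum>z\<in>Bs. \<Sum>x\<in>Bs. (U x y * \<psi> y) * cnj (U x z * \<psi> z))"
    by (rule sum.cong[OF refl], rule sum.swap)
  also have "\<dots> = (\<Sum>y\<in>Bs. \<Sum>z\<in>Bs. (\<psi> y * cnj (\<psi> z)) * (\<Sum>x\<in>Bs. cnj (U x z) * U x y))"
    by (simp add: sum_distrib_left mult_ac)
  also have "\<dots> = (\<Sum>y\<in>Bs. \<Sum>z\<in>Bs. (if z = y then \<psi> y * cnj (\<psi> z) else 0))"
  proof (rule sum.cong[OF refl], rule sum.cong[OF refl])
    fix y z assume "y \<in> Bs" "z \<in> Bs"
    then have "(\<Sum>x\<in>Bs. cnj (U x z) * U x y) = (if z = y then 1 else 0)"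
      using un unfolding unitary_on_def by blast
    then show "(\<psi> y * cnj (\<psi> z)) * (\<Sum>x\<in>Bs. cnj (U x z) * U x y) = (if z = y then \<psi> y * cnj (\<psi> z) else 0)"
      by simp
  qed
  also have "\<dots> = (\<Sum>y\<in>Bs. \<psi> y * cnj (\<psi> y))"
    using fin by simp
  also have "\<dots> = complex_of_real (nrm Bs \<psi>)" by (simp add: nrm_c)
  finally show ?thesis by (simp only: of_real_eq_iff)
qed

lemma query_nrm:
  assumes P: "\<And>i. i < n \<Longrightarrow> fst (P ! i) < 2^kc \<and> snd (P ! i) < 2^kr"
  shows "nrm (qbasis_set n kc kr W) (query_op P \<psi>) = nrm (qbasis_set n kc kr W) \<psi>"
proof -
  define sg where "sg = (\<lambda>(i::nat, c::nat, r::nat, w::nat). (i, Bit_Operations.xor c (fst (P ! i)), Bit_Operations.xor r (snd (P ! i)), w))"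
  let ?Bs = "qbasis_set n kc kr W"
  have inv: "sg (sg x) = x" for x
    by (cases x) (simp add: sg_def xor_xor_cancel)
  have mem: "sg x \<in> ?Bs" if "x \<in> ?Bs" for x
    using that P by (cases x) (auto simp: sg_def qbasis_set_def intro!: xor_lt)
  have q: "query_op P \<psi> x = \<psi> (sg x)" for x
    by (cases x) (simp add: sg_def query_op_def)
  show ?thesis unfolding nrm_def
    by (rule sum.reindex_bij_witness[where i=sg and j=sg]) (auto simp: inv mem q)
qed




lemma sublist_self: "sublist xs xs"
  unfolding sublist_def by (metis append.left_neutral append.right_neutral)

lemma lcs_self: "lcs_len X X = length X"
  unfolding lcs_len_def
proof (rule Max_eqI)
  show "finite {length z |z. sublist z X \<and> sublist z X}"
    by (rule finite_subset[of _ "{..length X}"]) (auto dest: sublist_length_le)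
  show "y \<le> length X" if "y \<in> {length z |z. sublist z X \<and> sublist z X}" for y
    using that by (auto dest: sublist_length_le)
  show "length X \<in> {length z |z. sublist z X \<and> sublist z X}"
    using sublist_self by blast
qed

lemma length_decode: "length (decode A) = sum_list (map snd A)"
  by (induction A) (auto simp: decode_def)

lemma mk_Suc: "mk (Suc n) S = mk n S @ [(n mod 2, if n \<in> S then 2 else 1)]"
  by (simp add: mk_def)

lemma sum_mk: "sum_list (map snd (mk n S)) = n + card (S \<inter> {..<n})"
proof (induction n)
  case 0 then show ?case by (simp add: mk_def)
next
  case (Suc n)
  show ?case
  proof (cases "n \<in> S")
    case True
    then have "S \<inter> {..<Suc n} = insert n (S \<inter> {..<n})" by (auto simp: lessThan_Suc)
    then have "card (S \<inter> {..<Suc n}) = Suc (card (S \<inter> {..<n}))" by simp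
    then show ?thesis using Suc True by (simp add: mk_Suc)
  next
    case False
    then have "S \<inter> {..<Suc n} = S \<inter> {..<n}" by (auto simp: lessThan_Suc)
    then show ?thesis using Suc False by (simp add: mk_Suc)
  qed
qed

lemma length_mk: "length (mk n S) = n" by (simp add: mk_def)

lemma valid_mk: "valid_rle (mk n S)"
  unfolding valid_rle_def length_mk
proof (intro conjI allI impI)
  fix k assume "k < n" then show "1 \<le> snd (mk n S ! k)" by (simp add: mk_nth)
next
  fix k assume "Suc k < n"
  then show "fst (mk n S ! k) \<noteq> fst (mk n S ! Suc k)" by (simp add: mk_nth) presburger
qed

lemma set_mk: "p \<in> set (mk n S) \<Longrightarrow> fst p < 2 \<and> 1 \<le> snd p \<and> snd p \<le> 2"
  by (auto simp: mk_def)

lemma init_nrm: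
  assumes "z \<in> Bs" "finite Bs"
  shows "nrm Bs (\<lambda>x. if x = z then 1 else 0) = 1"
proof -
  have "(\<lambda>x. (cmod (if x = z then 1 else 0))^2) = (\<lambda>x. if x = z then 1 else (0::real))" by auto
  have "nrm Bs (\<lambda>x. if x = z then 1 else 0) = (\<Sum>x\<in>Bs. if x = z then 1 else (0::real))"
    unfolding nrm_def by (rule sum.cong) auto
  then show ?thesis using assms by simp
qed

lemma total_nrm:
  assumes z: "(0,0,0,0) \<in> qbasis_set n kc kr W"
    and un: "\<forall>t\<le>T. unitary_on (qbasis_set n kc kr W) (U t)"
    and PA: "\<And>i. i < n \<Longrightarrow> fst (A ! i) < 2^kc \<and> snd (A ! i) < 2^kr"
    and PB: "\<And>i. i < n \<Longrightarrow> fst (B ! i) < 2^kc \<and> snd (B ! i) < 2^kr"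
  shows "t \<le> T \<Longrightarrow> nrm (qbasis_set n kc kr W) (qrun (qbasis_set n kc kr W) U sched A B t) = 1"
proof (induction t)
  have fin: "finite (qbasis_set n kc kr W)" by (simp add: qbasis_set_def)
  case 0
  then show ?case using unitary_nrm[OF fin] un init_nrm[OF z fin] by simp
next
  have fin: "finite (qbasis_set n kc kr W)" by (simp add: qbasis_set_def)
  case (Suc t)
  have "unitary_on (qbasis_set n kc kr W) (U (Suc t))" using un Suc.prems by simp
  then have "nrm (qbasis_set n kc kr W) (qrun (qbasis_set n kc kr W) U sched A B (Suc t))
     = nrm (qbasis_set n kc kr W) (query_op (if sched t then A else B) (qrun (qbasis_set n kc kr W) U sched A B t))"
    using unitary_nrm[OF fin] by simp
  also have "\<dots> = nrm (qbasis_set n kc kr W) (qrun (qbasis_set n kc kr W) U sched A B t)"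
    using query_nrm PA PB by (cases "sched t") auto
  also have "\<dots> = 1" using Suc by simp
  finally show ?case .
qed




lemma nrm_mono: "finite Y \<Longrightarrow> X \<subseteq> Y \<Longrightarrow> nrm X \<psi> \<le> nrm Y \<psi>"
  unfolding nrm_def by (rule sum_mono2) auto

lemma nrm_split: "finite Y \<Longrightarrow> nrm Y \<psi> = nrm {x\<in>Y. P x} \<psi> + nrm {x\<in>Y. \<not> P x} \<psi>"
proof -
  assume f: "finite Y"
  have "Y = {x\<in>Y. P x} \<union> {x\<in>Y. \<not> P x}" by blast
  then have "nrm Y \<psi> = (\<Sum>x\<in>{x\<in>Y. P x} \<union> {x\<in>Y. \<not> P x}. (cmod (\<psi> x))^2)"
    unfolding nrm_def by simp
  also have "\<dots> = nrm {x\<in>Y. P x} \<psi> + nrm {x\<in>Y. \<not> P x} \<psi>"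
    unfolding nrm_def by (rule sum.union_disjoint) (use f in auto)
  finally show ?thesis .
qed

theorem lemma7:
  shows "\<exists>c::real>0. \<exists>n0::nat. \<forall>n\<ge>n0. \<forall>kc kr W T (U :: nat \<Rightarrow> qmat) sched (out :: qbasis \<Rightarrow> nat).
     n < 2^kc \<longrightarrow> n < 2^kr \<longrightarrow> 0 < W \<longrightarrow>
     (\<forall>t\<le>T. unitary_on (qbasis_set n kc kr W) (U t)) \<longrightarrow>
     (\<forall>A B. length A = n \<longrightarrow> length B = n \<longrightarrow> valid_rle A \<longrightarrow> valid_rle B \<longrightarrow>
        (\<forall>p\<in>set A \<union> set B. fst p < 2^kc \<and> snd p < 2^kr) \<longrightarrow>
        succ_prob (qbasis_set n kc kr W) U sched out T A B
          (lcs_len (decode A) (decode B)) \<ge> 2/3) \<longrightarrow>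
     real T \<ge> c * real n"
proof (intro exI[of _ "1/2"] conjI exI[of _ "2"] allI impI)
  show "(0::real) < 1/2" by simp
  fix n kc kr W T and U :: "nat \<Rightarrow> qmat" and sched and out :: "qbasis \<Rightarrow> nat"
  assume n2: "2 \<le> n" and nkc: "n < 2^kc" and nkr: "n < 2^kr" and W: "0 < W"
    and un: "\<forall>t\<le>T. unitary_on (qbasis_set n kc kr W) (U t)"
    and succ: "\<forall>A B. length A = n \<longrightarrow> length B = n \<longrightarrow> valid_rle A \<longrightarrow> valid_rle B \<longrightarrow>
        (\<forall>p\<in>set A \<union> set B. fst p < 2^kc \<and> snd p < 2^kr) \<longrightarrow>
        succ_prob (qbasis_set n kc kr W) U sched out T A B
          (lcs_len (decode A) (decode B)) \<ge> 2/3"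
  show "real T \<ge> 1/2 * real n"
  proof (rule ccontr)
    assume "\<not> real T \<ge> 1/2 * real n"
    then have Tn: "T + T < n" by linarith
    let ?Bs = "qbasis_set n kc kr W"
    have fin: "finite ?Bs" by (simp add: qbasis_set_def)
    let ?E = "{x\<in>?Bs. even (out x)}"
    define amp where "amp S = qrun ?Bs U sched (mk n S) (mk n S) T" for S
    define Pe where "Pe S = nrm ?E (amp S)" for S
    have bnd: "fst p < 2^kc \<and> snd p < 2^kr" if "p \<in> set (mk n S)" for p S
    proof -
      have "(2::nat) \<le> 2^kc" "(2::nat) < 2^kr" using n2 nkc nkr by linarith+
      then show ?thesis using set_mk[OF that] by linarith
    qed
    have bndi: "fst (mk n S ! i) < 2^kc \<and> snd (mk n S ! i) < 2^kr" if "i < n" for i S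
      using bnd[of "mk n S ! i" S] that by (simp add: length_mk)
    have z: "(0,0,0,0) \<in> ?Bs" using n2 W by (simp add: qbasis_set_def)
    have tot: "nrm ?Bs (amp S) = 1" for S
      unfolding amp_def by (rule total_nrm[OF z un bndi bndi]) auto
    have key: "(if even (n + card S) then Pe S \<ge> 2/3 else Pe S \<le> 1/3)" if S: "S \<subseteq> {..<n}" for S
    proof -
      have "succ_prob ?Bs U sched out T (mk n S) (mk n S) (lcs_len (decode (mk n S)) (decode (mk n S))) \<ge> 2/3"
        using succ bnd by (simp add: length_mk valid_mk)
      moreover have "lcs_len (decode (mk n S)) (decode (mk n S)) = n + card S"
        using S by (simp add: lcs_self length_decode sum_mk Int_absorb2)
      ultimately have sp: "nrm {x\<in>?Bs. out x = n + card S} (amp S) \<ge> 2/3"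
        by (simp add: succ_prob_def nrm_def amp_def)
      show ?thesis
      proof (cases "even (n + card S)")
        case True
        have "{x\<in>?Bs. out x = n + card S} \<subseteq> ?E" using True by auto
        then have "nrm {x\<in>?Bs. out x = n + card S} (amp S) \<le> Pe S"
          unfolding Pe_def by (rule nrm_mono[rotated]) (simp add: fin)
        then show ?thesis using True sp by simp
      next
        case False
        have "{x\<in>?Bs. out x = n + card S} \<subseteq> {x\<in>?Bs. \<not> even (out x)}" using False by auto
        then have "nrm {x\<in>?Bs. out x = n + card S} (amp S) \<le> nrm {x\<in>?Bs. \<not> even (out x)} (amp S)"
          by (rule nrm_mono[rotated]) (simp add: fin)
        moreover have "1 = Pe S + nrm {x\<in>?Bs. \<not> even (out x)} (amp S)"
          using nrm_split[OF fin, of "amp S" "\<lambda>x. even (out x)"] tot[of S] unfolding Pe_def by simp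
        ultimately show ?thesis using False sp by simp
      qed
    qed
    have ldP: "ld (T+T) (\<lambda>S. complex_of_real (Pe S))"
    proof -
      have "(\<lambda>S. complex_of_real (Pe S)) = (\<lambda>S. \<Sum>x\<in>?E. amp S x * cnj (amp S x))"
        unfolding Pe_def by (simp add: nrm_c)
      moreover have "ld (T+T) (\<lambda>S. \<Sum>x\<in>?E. amp S x * cnj (amp S x))"
      proof (rule ld_sum)
        show "finite ?E" using fin by simp
        fix x
        show "ld (T+T) (\<lambda>S. amp S x * cnj (amp S x))"
          unfolding amp_def by (rule ld_mult[OF amp_ld ld_cnj[OF amp_ld]])
      qed
      ultimately show ?thesis by simp
    qed
    have c1: "(\<Sum>S\<in>Pow {..<n}. (-1)^card S * complex_of_real (Pe S)) = 0"
      by (rule ld_cancel[OF ldP Tn])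
    have c2: "(\<Sum>S\<in>Pow {..<n}. (-1)^card S * (\<lambda>S. (1::complex)) S) = 0"
      by (rule ld_cancel[OF ld_const[of 0]]) (use n2 in simp)
    have r1: "(\<Sum>S\<in>Pow {..<n}. (-1)^card S * Pe S) = 0"
    proof -
      have "complex_of_real (\<Sum>S\<in>Pow {..<n}. (-1)^card S * Pe S) = 0" using c1 by simp
      then show ?thesis by (simp only: of_real_eq_0_iff)
    qed
    have r2: "(\<Sum>S\<in>Pow {..<n}. (-1)^card S :: real) = 0"
    proof -
      have "complex_of_real (\<Sum>S\<in>Pow {..<n}. (-1)^card S) = 0" using c2 by simp
      then show ?thesis by (simp only: of_real_eq_0_iff)
    qed
    have ge: "(-1)^(n + card S) * (Pe S - 1/2) \<ge> (1/6::real)" if "S \<in> Pow {..<n}" for S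
      using key[of S] that by (cases "even (n + card S)") (auto simp: minus_one_power_iff)
    have "(\<Sum>S\<in>Pow {..<n}. (1/6::real)) \<le> (\<Sum>S\<in>Pow {..<n}. (-1)^(n + card S) * (Pe S - 1/2))"
      by (rule sum_mono) (rule ge)
    also have "\<dots> = (-1)^n * ((\<Sum>S\<in>Pow {..<n}. (-1)^card S * Pe S) - 1/2 * (\<Sum>S\<in>Pow {..<n}. (-1)^card S))"
      by (simp add: power_add sum_distrib_left sum_subtractf right_diff_distrib mult_ac)
    also have "\<dots> = 0" using r1 r2 by simp
    finally have "(\<Sum>S\<in>Pow {..<n}. (1/6::real)) \<le> 0" .
    moreover have "(\<Sum>S\<in>Pow {..<n}. (1/6::real)) > 0"
      by (simp add: card_Pow)
    ultimately show False by linarith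
  qed
qed


end
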